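(* Let $\alpha=(\alpha_j)_{j\ge1}$ and $\beta=(\beta_j)_{j\ge0}$ be sequences of positive numbers (or independent variables) and let $\zeta_{nk}=\zeta_{nk}(\alpha,\beta)$ be the Euler polynomials generated by $\alpha,\beta$. If $n\in\mathbf N$ and $0\le k\le n$, then $$\zeta_{nk}(\alpha,\beta)=\zeta_{n-1,k-1}(\alpha,\beta)\,\alpha_{n-k+1}+\zeta_{n-1,k}(\alpha,\beta)\,\beta_k .$$
   Context: For $\omega=(\varepsilon_1,\dots,\varepsilon_n)\in\{0,1\}^n$ define $w_n(\omega)=\prod_{m=1}^n g_m$, where, with $j=\#\{l:1\le l\le m-1,\ \varepsilon_l=0\}$, $g_m=\alpha_{m-j}$ if $\varepsilon_m=0$ and $g_m=\beta_j$ if $\varepsilon_m=1$. For $n\ge1$, $0\le k\le n$, $\zeta_{nk}(\alpha,\beta)=\sum w_n(\omega)$ over all $\omega\in\{0,1\}^n$ with exactly $k$ zeros; $\zeta_{00}=1$ and $\zeta_{nk}=0$ if $k<0$ or $k>n$. *)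

theory Defs
  imports Main "HOL-Library.FuncSet"
begin

text \<open>A word \<omega> = (\<epsilon>_1,...,\<epsilon>_n) in {0,1}^n is represented as a function
  eps :: nat => nat, extensional on {1..n} with values in {0,1}.\<close>

definition zeros_before :: "(nat \<Rightarrow> nat) \<Rightarrow> nat \<Rightarrow> nat" where
  "zeros_before eps m = card {l. 1 \<le> l \<and> l \<le> m - 1 \<and> eps l = 0}"

definition gfac :: "(nat \<Rightarrow> 'a) \<Rightarrow> (nat \<Rightarrow> 'a) \<Rightarrow> (nat \<Rightarrow> nat) \<Rightarrow> nat \<Rightarrow> 'a" where
  "gfac \<alpha> \<beta> eps m =
     (if eps m = 0 then \<alpha> (m - zeros_before eps m) else \<beta> (zeros_before eps m))"

definition wword :: "(nat \<Rightarrow> 'a::comm_monoid_mult) \<Rightarrow> (nat \<Rightarrow> 'a) \<Rightarrow> nat \<Rightarrow> (nat \<Rightarrow> nat) \<Rightarrow> 'a" where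
  "wword \<alpha> \<beta> n eps = (\<Prod>m = 1..n. gfac \<alpha> \<beta> eps m)"

definition words :: "nat \<Rightarrow> (nat \<Rightarrow> nat) set" where
  "words n = {1..n} \<rightarrow>\<^sub>E {0, 1}"

text \<open>Euler polynomials \<zeta>_{nk}(\<alpha>,\<beta>); k is an integer so that \<zeta>_{n,k}=0 for k<0 or k>n.\<close>
definition zeta :: "(nat \<Rightarrow> 'a::comm_semiring_1) \<Rightarrow> (nat \<Rightarrow> 'a) \<Rightarrow> nat \<Rightarrow> int \<Rightarrow> 'a" where
  "zeta \<alpha> \<beta> n k =
     (if k < 0 \<or> k > int n then 0
      else if n = 0 then 1
      else (\<Sum>eps \<in> {eps \<in> words n. card {l \<in> {1..n}. eps l = 0} = nat k}. wword \<alpha> \<beta> n eps))"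

end

theory Submission
  imports Defs
begin

definition cnt :: "nat \<Rightarrow> (nat \<Rightarrow> nat) \<Rightarrow> nat" where
  "cnt n e = card {l \<in> {1..n}. e l = 0}"

definition S :: "(nat \<Rightarrow> 'a::comm_semiring_1) \<Rightarrow> (nat \<Rightarrow> 'a) \<Rightarrow> nat \<Rightarrow> nat \<Rightarrow> 'a" where
  "S \<alpha> \<beta> n k = (\<Sum>eps \<in> {eps \<in> words n. cnt n eps = k}. wword \<alpha> \<beta> n eps)"

lemma finite_words: "finite (words n)"
  unfolding words_def by (intro finite_PiE) auto

lemma cnt_le: "cnt n e \<le> n"
proof -
  have "cnt n e \<le> card {1..n}" unfolding cnt_def by (intro card_mono) auto
  thus ?thesis by simp
qed

lemma zeta_S: "zeta \<alpha> \<beta> n (int k) = S \<alpha> \<beta> n k"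
proof (cases "k \<le> n")
  case True
  show ?thesis
  proof (cases "n = 0")
    case True
    with \<open>k \<le> n\<close> have "k = 0" by simp
    have w: "words 0 = {\<lambda>_. undefined}" unfolding words_def by auto
    show ?thesis using True \<open>k = 0\<close> unfolding zeta_def S_def
      by (simp add: w cnt_def wword_def)
  next
    case False
    then show ?thesis using True unfolding zeta_def S_def cnt_def by simp
  qed
next
  case False
  then have em: "{eps \<in> words n. cnt n eps = k} = {}" using cnt_le[of n] by fastforce
  have "S \<alpha> \<beta> n k = 0" unfolding S_def by (simp only: em sum.empty)
  then show ?thesis using False unfolding zeta_def by simp
qed

lemma zb_upd: "m \<le> Suc n \<Longrightarrow> zeros_before (e(Suc n := c)) m = zeros_before e m"
  unfolding zeros_before_def by (rule arg_cong[where f=card]) auto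

lemma zb_last: "zeros_before e (Suc n) = cnt n e"
  unfolding zeros_before_def cnt_def by (rule arg_cong[where f=card]) auto

lemma cnt_upd_low: "cnt n (e(Suc n := c)) = cnt n e"
  unfolding cnt_def by (rule arg_cong[where f=card]) auto

lemma wword_upd:
  "wword \<alpha> \<beta> (Suc n) (e(Suc n := c)) = wword \<alpha> \<beta> n e *
     (if c = 0 then \<alpha> (Suc n - cnt n e) else \<beta> (cnt n e))"
proof -
  have "(\<Prod>m = 1..n. gfac \<alpha> \<beta> (e(Suc n := c)) m) = (\<Prod>m = 1..n. gfac \<alpha> \<beta> e m)"
    by (rule prod.cong) (auto simp: gfac_def zb_upd)
  moreover have "gfac \<alpha> \<beta> (e(Suc n := c)) (Suc n) = (if c = 0 then \<alpha> (Suc n - cnt n e) else \<beta> (cnt n e))"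
    by (simp add: gfac_def zb_upd zb_last cnt_upd_low)
  ultimately show ?thesis unfolding wword_def by (simp add: prod.cl_ivl_Suc)
qed

lemma cnt_upd: "cnt (Suc n) (e(Suc n := c)) = cnt n e + (if c = 0 then 1 else 0)"
proof -
  have fin: "finite {l \<in> {1..n}. e l = 0}" by simp
  have "{l \<in> {1..Suc n}. (e(Suc n := c)) l = 0} = {l \<in> {1..n}. e l = 0} \<union> (if c = 0 then {Suc n} else {})"
    by auto
  then show ?thesis unfolding cnt_def using fin by (simp add: card_insert_if)
qed

lemma words_undef: "e \<in> words n \<Longrightarrow> e (Suc n) = undefined"
  unfolding words_def PiE_def extensional_def by auto

lemma inj_upd: "inj_on (\<lambda>e. e(Suc n := c)) (words n)"
proof (rule inj_onI)
  fix x y assume x: "x \<in> words n" and y: "y \<in> words n" and eq: "x(Suc n := c) = y(Suc n := c)"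
  show "x = y"
  proof
    fix i show "x i = y i"
      using fun_cong[OF eq, of i] words_undef[OF x] words_undef[OF y] by (cases "i = Suc n") auto
  qed
qed

lemma S_Suc:
  "S \<alpha> \<beta> (Suc n) k =
     (\<Sum>e \<in> {e \<in> words n. cnt n e + 1 = k}. wword \<alpha> \<beta> n e * \<alpha> (Suc n - cnt n e)) +
     (\<Sum>e \<in> {e \<in> words n. cnt n e = k}. wword \<alpha> \<beta> n e * \<beta> (cnt n e))"
proof -
  define U0 where "U0 = (\<lambda>e. e(Suc n := 0)) ` {e \<in> words n. cnt n e + 1 = k}"
  define U1 where "U1 = (\<lambda>e. e(Suc n := 1)) ` {e \<in> words n. cnt n e = k}"
  have wS: "e(Suc n := c) \<in> words (Suc n)" if "e \<in> words n" "c \<in> {0,1}" for e c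
    using that unfolding words_def PiE_def extensional_def Pi_def by (auto simp: le_Suc_eq)
  have split: "{e \<in> words (Suc n). cnt (Suc n) e = k} = U0 \<union> U1"
  proof
    show "U0 \<union> U1 \<subseteq> {e \<in> words (Suc n). cnt (Suc n) e = k}"
      unfolding U0_def U1_def using wS by (auto simp: cnt_upd)
  next
    show "{e \<in> words (Suc n). cnt (Suc n) e = k} \<subseteq> U0 \<union> U1"
    proof
      fix e' assume e': "e' \<in> {e \<in> words (Suc n). cnt (Suc n) e = k}"
      define e where "e = e'(Suc n := undefined)"
      have ew: "e \<in> words n" using e' unfolding e_def words_def PiE_def extensional_def Pi_def by (auto simp: le_Suc_eq)
      have ee: "e' = e(Suc n := e' (Suc n))" unfolding e_def by simp
      have c: "e' (Suc n) \<in> {0,1}" using e' unfolding words_def by auto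
      have k: "cnt n e + (if e' (Suc n) = 0 then 1 else 0) = k"
        using e' cnt_upd[of n e "e' (Suc n)"] ee by simp
      show "e' \<in> U0 \<union> U1"
      proof (cases "e' (Suc n) = 0")
        case True
        then show ?thesis unfolding U0_def using ew k ee by (auto intro!: image_eqI[of _ _ e])
      next
        case False
        then have "e' (Suc n) = 1" using c by auto
        then show ?thesis unfolding U1_def using ew k ee by (auto intro!: image_eqI[of _ _ e])
      qed
    qed
  qed
  have disj: "U0 \<inter> U1 = {}" unfolding U0_def U1_def by (auto dest: fun_cong[where x="Suc n"])
  have fin0: "finite U0" unfolding U0_def using finite_words by simp
  have fin1: "finite U1" unfolding U1_def using finite_words by simp
  have s0: "sum (wword \<alpha> \<beta> (Suc n)) U0 = (\<Sum>e \<in> {e \<in> words n. cnt n e + 1 = k}. wword \<alpha> \<beta> n e * \<alpha> (Suc n - cnt n e))"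
    unfolding U0_def
    by (subst sum.reindex) (auto intro: inj_on_subset[OF inj_upd] simp: wword_upd)
  have s1: "sum (wword \<alpha> \<beta> (Suc n)) U1 = (\<Sum>e \<in> {e \<in> words n. cnt n e = k}. wword \<alpha> \<beta> n e * \<beta> (cnt n e))"
    unfolding U1_def
    by (subst sum.reindex) (auto intro: inj_on_subset[OF inj_upd] simp: wword_upd)
  show ?thesis unfolding S_def split
    by (simp add: sum.union_disjoint[OF fin0 fin1 disj] s0 s1)
qed

theorem theorem6p1:
  fixes \<alpha> \<beta> :: "nat \<Rightarrow> 'a::comm_ring_1" and n k :: nat
  assumes "n \<ge> 1" and "k \<le> n"
  shows "zeta \<alpha> \<beta> n (int k)
           = zeta \<alpha> \<beta> (n - 1) (int k - 1) * \<alpha> (n - k + 1) + zeta \<alpha> \<beta> (n - 1) (int k) * \<beta> k"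
proof -
  obtain m where n: "n = Suc m" using assms(1) by (cases n) auto
  have A: "(\<Sum>e \<in> {e \<in> words m. cnt m e + 1 = k}. wword \<alpha> \<beta> m e * \<alpha> (Suc m - cnt m e))
        = zeta \<alpha> \<beta> m (int k - 1) * \<alpha> (n - k + 1)"
  proof (cases k)
    case 0
    then show ?thesis by (simp add: zeta_def)
  next
    case (Suc j)
    have "int k - 1 = int j" using Suc by simp
    then have "zeta \<alpha> \<beta> m (int k - 1) = S \<alpha> \<beta> m j" by (simp add: zeta_S)
    moreover have "(\<Sum>e \<in> {e \<in> words m. cnt m e + 1 = k}. wword \<alpha> \<beta> m e * \<alpha> (Suc m - cnt m e))
        = (\<Sum>e \<in> {e \<in> words m. cnt m e = j}. wword \<alpha> \<beta> m e) * \<alpha> (n - k + 1)"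
      unfolding sum_distrib_right using Suc assms(2) n by (intro sum.cong) (auto simp: Suc_diff_le)
    ultimately show ?thesis by (simp add: S_def)
  qed
  have B: "(\<Sum>e \<in> {e \<in> words m. cnt m e = k}. wword \<alpha> \<beta> m e * \<beta> (cnt m e))
        = zeta \<alpha> \<beta> m (int k) * \<beta> k"
    unfolding zeta_S S_def sum_distrib_right by (intro sum.cong) auto
  show ?thesis using A B by (simp add: n zeta_S S_Suc)
qed

end
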